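(* Let $(X,u)$ be a regular Čech closure space and $(Y,v)$ an arbitrary Čech closure space, and let $Y^X$ be the set of all continuous maps $(X,u)\to(Y,v)$. For every interior cover $\mathcal C$ of $X$, the $\mathcal C$-topology on $Y^X$ is admissible.
   Context: A Čech closure space $(X,u)$ is a set $X$ with an operator $u:\mathcal P(X)\to\mathcal P(X)$ satisfying $u(\emptyset)=\emptyset$, $A\subset u(A)$, and $u(A\cup B)=u(A)\cup u(B)$. The interior is $\mathrm{int}_u A=X\setminus u(X\setminus A)$; $U$ is a neighbourhood of a point $x$ (of a set $A$) if $x\in\mathrm{int}_uU$ ($A\subset\mathrm{int}_uU$). $(X,u)$ is regular if for each $x\in X$ and $A\subset X$ with $x\notin u(A)$ there are disjoint neighbourhoods of $x$ and of $A$. A map $f:(X,u)\to(Y,v)$ is continuous if $f(u(A))\subset v(f(A))$ for all $A$. An interior cover of $X$ is a family $\mathcal C$ of subsets of $X$ such that $\{\mathrm{int}_uC: C\in\mathcal C\}$ covers $X$. Let $\mathcal V=\{V\subset Y:\mathrm{int}_vV\ne\emptyset\}$ and for $A\subset X$, $V\subset Y$ let $(A,V)=\{f\in Y^X: f(A)\subset V\}$. The $\mathcal C$-topology is the topology on $Y^X$ generated by the subbase $\{(u(K),V): V\in\mathcal V,\ K\subset X \text{ with } u(K)\subset C \text{ for some } C\in\mathcal C\}$. The product $(Z,w)\times(X,u)$ is $Z\times X$ with the closure operator for which the sets $W\times U$ ($W$ a neighbourhood of $z$, $U$ of $x$) form a neighbourhood base at $(z,x)$; for $g:Z\times X\to Y$,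 $g^*(z)(x)=g(z,x)$. A topology on $Y^X$ (regarded as its Kuratowski closure operator $\sigma$) is admissible if for every closure space $(Z,w)$ and every $g:Z\times X\to Y$ with $g^*(Z)\subset Y^X$, continuity of $g^*:(Z,w)\to(Y^X,\sigma)$ implies continuity of $g:(Z,w)\times(X,u)\to(Y,v)$. *)

theory Defs
  imports "HOL-Analysis.Analysis"
begin

text \<open>Cech closure spaces. The underlying set of a closure space is the whole
  type (UNIV); a closure operator is a map on subsets of the type.\<close>

definition cech_closure :: "('a set \<Rightarrow> 'a set) \<Rightarrow> bool" where
  "cech_closure u \<longleftrightarrow> u {} = {} \<and> (\<forall>A. A \<subseteq> u A) \<and> (\<forall>A B. u (A \<union> B) = u A \<union> u B)"

definition cl_int :: "('a set \<Rightarrow> 'a set) \<Rightarrow> 'a set \<Rightarrow> 'a set" where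
  "cl_int u A = UNIV - u (UNIV - A)"

definition cl_regular :: "('a set \<Rightarrow> 'a set) \<Rightarrow> bool" where
  "cl_regular u \<longleftrightarrow> (\<forall>x A. x \<notin> u A \<longrightarrow>
      (\<exists>U W. x \<in> cl_int u U \<and> A \<subseteq> cl_int u W \<and> U \<inter> W = {}))"

definition cl_continuous :: "('a set \<Rightarrow> 'a set) \<Rightarrow> ('b set \<Rightarrow> 'b set) \<Rightarrow> ('a \<Rightarrow> 'b) \<Rightarrow> bool" where
  "cl_continuous u v f \<longleftrightarrow> (\<forall>A. f ` (u A) \<subseteq> v (f ` A))"

definition interior_cover :: "('a set \<Rightarrow> 'a set) \<Rightarrow> 'a set set \<Rightarrow> bool" where
  "interior_cover u \<C> \<longleftrightarrow> (\<forall>x. \<exists>C\<in>\<C>. x \<in> cl_int u C)"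

definition prod_closure :: "('c set \<Rightarrow> 'c set) \<Rightarrow> ('a set \<Rightarrow> 'a set) \<Rightarrow> ('c \<times> 'a) set \<Rightarrow> ('c \<times> 'a) set" where
  "prod_closure w u A = {(z, x). \<forall>W U. z \<in> cl_int w W \<and> x \<in> cl_int u U \<longrightarrow> (W \<times> U) \<inter> A \<noteq> {}}"

definition cont_maps :: "('a set \<Rightarrow> 'a set) \<Rightarrow> ('b set \<Rightarrow> 'b set) \<Rightarrow> ('a \<Rightarrow> 'b) set" where
  "cont_maps u v = {f. cl_continuous u v f}"

definition C_topology :: "('a set \<Rightarrow> 'a set) \<Rightarrow> ('b set \<Rightarrow> 'b set) \<Rightarrow> 'a set set \<Rightarrow> ('a \<Rightarrow> 'b) topology" where
  "C_topology u v \<C> = topology_generated_by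
     (insert (cont_maps u v)
       {{f \<in> cont_maps u v. f ` (u K) \<subseteq> V} | K V.
          cl_int v V \<noteq> {} \<and> (\<exists>C\<in>\<C>. u K \<subseteq> C)})"

text \<open>Admissibility of a topology T on Y^X (with Kuratowski closure sigma = closure_of T),
  tested against closure spaces Z ranging over the type 'c.\<close>
definition admissible :: "('a set \<Rightarrow> 'a set) \<Rightarrow> ('b set \<Rightarrow> 'b set) \<Rightarrow> ('a \<Rightarrow> 'b) topology
     \<Rightarrow> 'c itself \<Rightarrow> bool" where
  "admissible u v T (Z :: 'c itself) \<longleftrightarrow>
    (\<forall>(w :: 'c set \<Rightarrow> 'c set) (g :: 'c \<times> 'a \<Rightarrow> 'b).
       cech_closure w \<longrightarrow> (curry g) ` UNIV \<subseteq> cont_maps u v \<longrightarrow>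
       cl_continuous w (\<lambda>B. T closure_of B) (curry g) \<longrightarrow>
       cl_continuous (prod_closure w u) v g)"

end

theory Submission
  imports Defs
begin

lemma cech_mono:
  assumes "cech_closure u" "A \<subseteq> B" shows "u A \<subseteq> u B"
proof -
  have "B = A \<union> B" using assms(2) by blast
  then have "u B = u A \<union> u B" using assms(1) unfolding cech_closure_def by metis
  then show ?thesis by blast
qed

theorem theorem9:
  fixes u :: "'a set \<Rightarrow> 'a set" and v :: "'b set \<Rightarrow> 'b set" and \<C> :: "'a set set"
  assumes "cech_closure u" and "cl_regular u" and "cech_closure v"
    and "interior_cover u \<C>"
  shows "admissible u v (C_topology u v \<C>) TYPE('c)"
  unfolding admissible_def
proof (intro allI impI)
  fix w :: "'c set \<Rightarrow> 'c set" and g :: "'c \<times> 'a \<Rightarrow> 'b"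
  assume cw: "cech_closure w" and gX: "range (curry g) \<subseteq> cont_maps u v"
    and gc: "cl_continuous w (\<lambda>B. C_topology u v \<C> closure_of B) (curry g)"
  let ?T = "C_topology u v \<C>"
  show "cl_continuous (prod_closure w u) v g"
    unfolding cl_continuous_def
  proof (intro allI subsetI)
    fix A q assume "q \<in> g ` prod_closure w u A"
    then obtain z x where zx: "(z, x) \<in> prod_closure w u A" and q: "q = g (z, x)" by auto
    show "q \<in> v (g ` A)"
    proof (rule ccontr)
      assume nq: "q \<notin> v (g ` A)"
      define B where "B = g ` A"
      define V where "V = UNIV - B"
      define f where "f = curry g z"
      have fc: "cl_continuous u v f" using gX unfolding f_def cont_maps_def by auto
      have "UNIV - V = B" unfolding V_def by auto
      then have yV: "f x \<in> cl_int v V" using nq q unfolding cl_int_def B_def f_def by auto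
      have xint: "x \<in> cl_int u (f -` V)"
      proof -
        have "x \<notin> u (UNIV - f -` V)"
        proof
          assume "x \<in> u (UNIV - f -` V)"
          then have "f x \<in> v (f ` (UNIV - f -` V))" using fc unfolding cl_continuous_def by blast
          moreover have "v (f ` (UNIV - f -` V)) \<subseteq> v (UNIV - V)"
            by (rule cech_mono[OF assms(3)]) auto
          ultimately show False using yV unfolding cl_int_def by auto
        qed
        then show ?thesis unfolding cl_int_def by auto
      qed
      obtain C where C: "C \<in> \<C>" "x \<in> cl_int u C" using assms(4) unfolding interior_cover_def by auto
      define N where "N = f -` V \<inter> C"
      have "UNIV - N = (UNIV - f -` V) \<union> (UNIV - C)" unfolding N_def by auto
      then have "u (UNIV - N) = u (UNIV - f -` V) \<union> u (UNIV - C)"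
        using assms(1) unfolding cech_closure_def by metis
      then have "x \<notin> u (UNIV - N)" using xint C(2) unfolding cl_int_def by auto
      then obtain U W where UW: "x \<in> cl_int u U" "UNIV - N \<subseteq> cl_int u W" "U \<inter> W = {}"
        using assms(2) unfolding cl_regular_def by blast
      have "u U \<subseteq> u (UNIV - W)" by (rule cech_mono[OF assms(1)]) (use UW(3) in auto)
      also have "\<dots> \<subseteq> N" using UW(2) unfolding cl_int_def by auto
      finally have uU: "u U \<subseteq> N" .
      define Ob where "Ob = {h \<in> cont_maps u v. h ` (u U) \<subseteq> V}"
      have Oopen: "openin ?T Ob"
        unfolding C_topology_def
        apply (rule topology_generated_by_Basis)
        unfolding Ob_def using yV uU C(1) unfolding N_def by blast
      have fO: "f \<in> Ob" using fc uU unfolding Ob_def N_def cont_maps_def by auto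
      define P where "P = {z'. curry g z' \<in> Ob}"
      have "z \<notin> w (UNIV - P)"
      proof
        assume "z \<in> w (UNIV - P)"
        then have "curry g z \<in> ?T closure_of (curry g ` (UNIV - P))"
          using gc unfolding cl_continuous_def by blast
        then show False using Oopen fO unfolding in_closure_of f_def P_def by blast
      qed
      then have zP: "z \<in> cl_int w P" unfolding cl_int_def by auto
      obtain z' x' where zx': "(z', x') \<in> A" "z' \<in> P" "x' \<in> U"
        using zx zP UW(1) unfolding prod_closure_def by blast
      have "x' \<in> u U" using zx'(3) assms(1) unfolding cech_closure_def by blast
      then have "g (z', x') \<in> V" using zx'(2) unfolding P_def Ob_def by auto
      moreover have "g (z', x') \<in> B" using zx'(1) unfolding B_def by auto
      ultimately show False unfolding V_def by auto
    qed
  qed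
qed

end
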